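(* Fix $\beta>0$. Both the sigmoid loss $L(x)=-\frac{1}{1+e^{-\beta x}}$ and the logistic loss $L(x)=-\ln\!\left(\frac{1}{1+e^{-\beta x}}\right)=\ln(1+e^{-\beta x})$ are consistent with AUC (in the sense defined in the context).
   Context: Let $\mathcal{Y}$ be a set of items and let $\mathcal{D}$ be a distribution on $\mathcal{Y}\times\{-1,+1\}$, with marginal $\mathcal{D}_{\mathcal{Y}}$ on $\mathcal{Y}$ and $\eta(y)=P[r=+1\mid y]$. For a measurable scoring function $s:\mathcal{Y}\to\mathbb{R}$, the AUC risk is $R(s)=\mathbb{E}_{(y,r),(y',r')\sim\mathcal{D}}\big[\ell(s,(y,r),(y',r'))\mid r\neq r'\big]$, where $\ell(s,(y,r),(y',r'))=\mathcal{I}\big((r-r')(s(y)-s(y'))<0\big)+\tfrac12\mathcal{I}(s(y)=s(y'))$ and $\mathcal{I}$ is the indicator function; $R(s^* )=\inf_s R(s)$ over measurable $s$ (the Bayes risk). For a surrogate loss $L:\mathbb{R}\to\mathbb{R}$, the surrogate risk is $R_L(s)=\mathbb{E}_{(y,y')\sim\mathcal{D}_{\mathcal{Y}}^2}\big[\eta(y)(1-\eta(y'))L(s(y)-s(y'))+\eta(y')(1-\eta(y))L(s(y')-s(y))\big]$, and $R_L(s^*_L)=\inf_s R_L(s)$. The loss $L$ is called consistent with AUC if for every distribution $\mathcal{D}$ on $\mathcal{Y}\times\{-1,+1\}$ and every sequence of scoring functions $(s^{\langle i\rangle})_{i\ge1}$, $R_L(s^{\langle i\rangle})\to R_L(s^*_L)$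 implies $R(s^{\langle i\rangle})\to R(s^* )$. *)

theory Defs
  imports "HOL-Probability.Probability"
begin

text \<open>Items live in a measurable space M (carrier space M, a type 'a).
  Labels in {-1,+1} are encoded as bool: True means +1, False means -1.\<close>

definition lab :: "bool \<Rightarrow> real" where
  "lab b = (if b then 1 else -1)"

definition auc_loss :: "('a \<Rightarrow> real) \<Rightarrow> 'a \<times> bool \<Rightarrow> 'a \<times> bool \<Rightarrow> real" where
  "auc_loss s z z' =
     (if (lab (snd z) - lab (snd z')) * (s (fst z) - s (fst z')) < 0 then 1 else 0)
     + (if s (fst z) = s (fst z') then 1/2 else 0)"

text \<open>AUC risk: conditional expectation of the loss over two independent draws
  from D, given that the labels differ (E[l * 1_A] / P(A)).\<close>
definition auc_risk :: "('a \<times> bool) measure \<Rightarrow> ('a \<Rightarrow> real) \<Rightarrow> real" where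
  "auc_risk D s =
     (\<integral>p. auc_loss s (fst p) (snd p) * indicator {p. snd (fst p) \<noteq> snd (snd p)} p \<partial>(D \<Otimes>\<^sub>M D))
     / measure (D \<Otimes>\<^sub>M D) {p \<in> space (D \<Otimes>\<^sub>M D). snd (fst p) \<noteq> snd (snd p)}"

definition auc_bayes :: "'a measure \<Rightarrow> ('a \<times> bool) measure \<Rightarrow> real" where
  "auc_bayes M D = (INF s \<in> borel_measurable M. auc_risk D s)"

text \<open>eta is a version of the conditional probability P[r = +1 | y]
  with respect to the marginal of D on M.\<close>
definition is_cond_pos ::
  "'a measure \<Rightarrow> ('a \<times> bool) measure \<Rightarrow> ('a \<Rightarrow> real) \<Rightarrow> bool" where
  "is_cond_pos M D \<eta> \<longleftrightarrow>
     \<eta> \<in> borel_measurable M \<and> (\<forall>y\<in>space M. 0 \<le> \<eta> y \<and> \<eta> y \<le> 1) \<and>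
     (\<forall>A\<in>sets M. measure D (A \<times> {True}) =
                    (\<integral>y. indicator A y * \<eta> y \<partial>(distr D M fst)))"

text \<open>Extended-real valued integral (positive part minus negative part), so that
  surrogate risks may take the value +infinity.\<close>
definition ext_integral :: "'b measure \<Rightarrow> ('b \<Rightarrow> real) \<Rightarrow> ereal" where
  "ext_integral N f =
     enn2ereal (\<integral>\<^sup>+x. ennreal (f x) \<partial>N) - enn2ereal (\<integral>\<^sup>+x. ennreal (- f x) \<partial>N)"

definition surr_risk ::
  "(real \<Rightarrow> real) \<Rightarrow> 'a measure \<Rightarrow> ('a \<times> bool) measure \<Rightarrow> ('a \<Rightarrow> real)
     \<Rightarrow> ('a \<Rightarrow> real) \<Rightarrow> ereal" where
  "surr_risk L M D \<eta> s =
     ext_integral (distr D M fst \<Otimes>\<^sub>M distr D M fst)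
       (\<lambda>(y, y'). \<eta> y * (1 - \<eta> y') * L (s y - s y') + \<eta> y' * (1 - \<eta> y) * L (s y' - s y))"

definition surr_bayes ::
  "(real \<Rightarrow> real) \<Rightarrow> 'a measure \<Rightarrow> ('a \<times> bool) measure \<Rightarrow> ('a \<Rightarrow> real) \<Rightarrow> ereal" where
  "surr_bayes L M D \<eta> = (INF s \<in> borel_measurable M. surr_risk L M D \<eta> s)"

definition auc_consistent :: "(real \<Rightarrow> real) \<Rightarrow> 'a measure \<Rightarrow> bool" where
  "auc_consistent L M \<longleftrightarrow>
     (\<forall>D \<eta>. prob_space D \<and> sets D = sets (M \<Otimes>\<^sub>M count_space UNIV) \<and> is_cond_pos M D \<eta> \<longrightarrow>
       (\<forall>s :: nat \<Rightarrow> 'a \<Rightarrow> real. (\<forall>i. s i \<in> borel_measurable M) \<longrightarrow>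
          (\<lambda>i. surr_risk L M D \<eta> (s i)) \<longlonglongrightarrow> surr_bayes L M D \<eta> \<longrightarrow>
          (\<lambda>i. auc_risk D (s i)) \<longlonglongrightarrow> auc_bayes M D))"

end

theory Submission
  imports Defs
begin

definition phi :: "(real \<Rightarrow> real) \<Rightarrow> real \<Rightarrow> real \<Rightarrow> real \<Rightarrow> real" where
  "phi L a b d = a * L d + b * L (- d)"

definition wr :: "real \<Rightarrow> real \<Rightarrow> real \<Rightarrow> real" where
  "wr a b d = (if d < 0 then max (a - b) 0 else 0) + (if d > 0 then max (b - a) 0 else 0)
      + (if d = 0 then \<bar>a - b\<bar> / 2 else 0)"

lemma wr_nonneg: "0 \<le> wr a b d" by (auto simp: wr_def)

lemma wr_le: "wr a b d \<le> \<bar>a - b\<bar>" by (auto simp: wr_def)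

lemma wr_swap: "wr a b d = wr b a (-d)" by (auto simp: wr_def abs_minus_commute)

definition sgl :: "real \<Rightarrow> real \<Rightarrow> real" where
  "sgl \<beta> x = - (1 / (1 + exp (- \<beta> * x)))"

definition sig :: "real \<Rightarrow> real" where "sig z = 1 / (1 + exp (- z))"

lemma sig_pos: "0 < sig z" unfolding sig_def by (simp add: add_pos_pos)
lemma sig_le1: "sig z \<le> 1"
proof -
  have "1 / (1 + exp (- z)) \<le> 1 / 1" by (rule divide_left_mono) (auto simp: add_pos_pos)
  then show ?thesis unfolding sig_def by simp
qed

lemma sig_neg: "sig (- z) = 1 - sig z"
proof -
  have "exp z * exp (-z) = 1" by (simp add: exp_minus)
  have p: "1 + exp z > 0" "1 + exp (-z) > 0" by (auto intro: add_pos_pos)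
  have "1 / (1 + exp z) = exp (-z) / (exp (-z) + 1)"
    by (simp add: exp_minus field_simps)
  then show ?thesis unfolding sig_def using p by (simp add: field_simps)
qed

lemma sig_lt_half: assumes "z < 0" shows "sig z < 1/2"
proof -
  have "exp (- z) > 1" using assms by simp
  then have h2: "2 < 1 + exp (- z)" by linarith
  have h3': "0 < 1 + exp (- z)" using h2 by linarith
  have h3: "0 < (1 + exp (- z)) * 2" using mult_pos_pos[OF h3', of 2] by simp
  have "1 / (1 + exp (- z)) < 1 / 2" using divide_strict_left_mono[OF h2 _ h3, of 1] by simp
  then show ?thesis unfolding sig_def by simp
qed

lemma sig_gt_half: "z > 0 \<Longrightarrow> sig z > 1/2"
  using sig_lt_half[of "-z"] sig_neg[of z] by simp

lemma sig_0: "sig 0 = 1/2" unfolding sig_def by simp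

lemma phi_sgl: "phi (sgl \<beta>) a b d = - b - (a - b) * sig (\<beta> * d)"
proof -
  have "sgl \<beta> d = - sig (\<beta> * d)" "sgl \<beta> (-d) = - sig (- (\<beta> * d))"
    unfolding sgl_def sig_def by simp_all
  then have "phi (sgl \<beta>) a b d = a * (- sig (\<beta> * d)) + b * (- (1 - sig (\<beta> * d)))"
    unfolding phi_def sig_neg by simp
  then show ?thesis by (simp add: algebra_simps)
qed

lemma sgl_lower:
  assumes "0 \<le> a" "0 \<le> b"
  shows "- max a b \<le> phi (sgl \<beta>) a b d"
proof -
  let ?s = "sig (\<beta> * d)"
  have s: "0 < ?s" "?s \<le> 1" by (rule sig_pos, rule sig_le1)
  show ?thesis
  proof (cases "b \<le> a")
    case True
    have "(a - b) * ?s \<le> (a - b)" using True s by (intro mult_left_le) auto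
    then show ?thesis unfolding phi_sgl using True by (simp add: max_def)
  next
    case False
    have "(b - a) * ?s \<ge> 0" using False s by simp
    then show ?thesis unfolding phi_sgl using False by (simp add: max_def algebra_simps)
  qed
qed

lemma sgl_calib:
  assumes "0 \<le> a" "a \<le> 1" "0 \<le> b" "b \<le> 1" "\<beta> > 0"
  shows "(wr a b d)\<^sup>2 \<le> 2 * (phi (sgl \<beta>) a b d - - max a b)"
proof -
  have w1: "wr a b d \<le> 1" using wr_le[of a b d] assms by linarith
  have "(wr a b d)\<^sup>2 \<le> wr a b d" using w1 wr_nonneg[of a b d]
    by (simp add: power2_eq_square mult_left_le)
  also have "wr a b d \<le> 2 * (phi (sgl \<beta>) a b d - - max a b)"
  proof -
    have s: "0 < sig (\<beta> * d)" "sig (\<beta> * d) \<le> 1" by (rule sig_pos, rule sig_le1)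
    have D: "phi (sgl \<beta>) a b d - - max a b = (if b \<le> a then (a - b) * (1 - sig (\<beta> * d))
        else (b - a) * sig (\<beta> * d))" unfolding phi_sgl by (simp add: max_def algebra_simps)
    consider "d < 0" | "d = 0" | "d > 0" by linarith
    then show ?thesis
    proof cases
      case 1
      then have h: "sig (\<beta> * d) < 1/2" using assms by (intro sig_lt_half) (simp add: mult_pos_neg)
      show ?thesis
      proof (cases "b \<le> a")
        case True
        have "(a - b) * sig (\<beta> * d) \<le> (a - b) * (1/2)" using True h by (intro mult_left_mono) auto
        then show ?thesis unfolding D wr_def using 1 True by (simp add: algebra_simps)
      next
        case False
        then show ?thesis unfolding D wr_def using 1 s by simp
      qed
    next
      case 2
      then show ?thesis unfolding D wr_def by (auto simp: sig_0)
    next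
      case 3
      then have h: "sig (\<beta> * d) > 1/2" using assms by (intro sig_gt_half) simp
      show ?thesis
      proof (cases "b \<le> a")
        case True
        have "(a - b) * sig (\<beta> * d) \<le> (a - b) * 1" using True s by (intro mult_left_mono) auto
        then show ?thesis unfolding D wr_def using 3 True by (simp add: algebra_simps)
      next
        case False
        have "(b - a) * sig (\<beta> * d) \<ge> (b - a) * (1/2)" using False h by (intro mult_left_mono) auto
        moreover have "wr a b d = b - a" unfolding wr_def using 3 False by simp
        ultimately show ?thesis unfolding D using False by simp
      qed
    qed
  qed
  finally show ?thesis .
qed

lemma sig_tail: assumes "c \<ge> 0" "\<beta> > 0" "k > 0"
  shows "c * (1 - sig (\<beta> * k * c)) \<le> 1 / (\<beta> * k)"
proof -
  define x where "x = \<beta> * k * c"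
  have e: "1 - sig x = 1 / (1 + exp x)"
    using sig_neg[of x] unfolding sig_def by simp
  have lt: "x < 1 + exp x"
    using exp_ge_add_one_self[of x] by linarith
  have bk: "\<beta> * k > 0" using assms by simp
  have p: "1 + exp x > 0" by (simp add: add_pos_pos)
  have "c * (\<beta> * k) \<le> 1 + exp x" using lt unfolding x_def by (simp add: algebra_simps)
  then have "c / (1 + exp x) \<le> 1 / (\<beta> * k)" using bk p
    by (simp add: divide_simps)
  then show ?thesis unfolding e x_def[symmetric] by simp
qed

lemma sgl_seq:
  assumes "0 \<le> a" "0 \<le> b" "\<beta> > 0" "k > 0"
  shows "phi (sgl \<beta>) a b (k * (a - b)) - - max a b \<le> 1 / (\<beta> * k)"
proof (cases "b \<le> a")
  case True
  have "phi (sgl \<beta>) a b (k * (a - b)) - - max a b = (a - b) * (1 - sig (\<beta> * k * (a - b)))"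
    unfolding phi_sgl using True by (simp add: max_def algebra_simps)
  also have "\<dots> \<le> 1 / (\<beta> * k)" using True assms by (intro sig_tail) auto
  finally show ?thesis .
next
  case False
  have e: "sig (\<beta> * (k * (a - b))) = 1 - sig (\<beta> * k * (b - a))"
    using sig_neg[of "\<beta> * k * (b - a)"] by (simp add: algebra_simps)
  have "phi (sgl \<beta>) a b (k * (a - b)) - - max a b = (b - a) * (1 - sig (\<beta> * k * (b - a)))"
    unfolding phi_sgl e using False by (simp add: max_def algebra_simps)
  also have "\<dots> \<le> 1 / (\<beta> * k)" using False assms by (intro sig_tail) auto
  finally show ?thesis .
qed


definition lgl :: "real \<Rightarrow> real \<Rightarrow> real" where
  "lgl \<beta> x = - ln (1 / (1 + exp (- \<beta> * x)))"

definition PhiL :: "real \<Rightarrow> real \<Rightarrow> real" where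
  "PhiL a b = a * ln ((a + b) / a) + b * ln ((a + b) / b)"

definition psi :: "real \<Rightarrow> real \<Rightarrow> real \<Rightarrow> real" where
  "psi a b t = a * ln (1 + 1 / t) + b * ln (1 + t)"

lemma phi_lgl: "phi (lgl \<beta>) a b d = psi a b (exp (\<beta> * d))"
proof -
  have p: "0 < 1 + exp z" for z :: real by (simp add: add_pos_pos)
  have "lgl \<beta> d = ln (1 + exp (- (\<beta> * d)))"
    unfolding lgl_def using p[of "- (\<beta> * d)"] by (simp add: ln_div)
  moreover have "lgl \<beta> (-d) = ln (1 + exp (\<beta> * d))"
    unfolding lgl_def using p[of "\<beta> * d"] by (simp add: ln_div)
  ultimately show ?thesis unfolding phi_def psi_def by (simp add: exp_minus inverse_eq_divide)
qed

lemma ln_diff_lower: "0 < (u::real) \<Longrightarrow> 0 < v \<Longrightarrow> 1 - v / u \<le> ln u - ln v"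
  using ln_le_minus_one[of "v / u"] by (simp add: ln_div)

lemma PhiL_swap: "PhiL a b = PhiL b a" unfolding PhiL_def by (simp add: add.commute)

lemma phi_swap: "phi L a b d = phi L b a (- d)" unfolding phi_def by simp

lemma gibbs_part:
  fixes a b w w' :: real
  assumes "0 \<le> a" "0 \<le> b" "0 < w" "0 < w'"
  shows "a - (a + b) * w / (w + w') \<le> a * ln ((w + w') / w) - a * ln ((a + b) / a)"
proof (cases "a = 0")
  case True
  have "0 \<le> b * w / (w + w')" using assms by (simp add: zero_le_divide_iff)
  then show ?thesis using True by simp
next
  case False
  then have a: "a > 0" using assms by simp
  have u: "0 < (w + w') / w" using assms by simp
  have v: "0 < (a + b) / a" using a assms by simp
  have "1 - ((a + b) / a) / ((w + w') / w) \<le> ln ((w + w') / w) - ln ((a + b) / a)"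
    by (rule ln_diff_lower[OF u v])
  then have "a * (1 - ((a + b) / a) / ((w + w') / w)) \<le> a * (ln ((w + w') / w) - ln ((a + b) / a))"
    using a by (intro mult_left_mono) auto
  moreover have "a * (1 - ((a + b) / a) / ((w + w') / w)) = a - (a + b) * w / (w + w')"
  proof -
    have "a * w > 0" "a * w' > 0" using a assms by simp_all
    then have nz: "a * w + a * w' \<noteq> 0" by linarith
    show ?thesis using a assms nz by (simp add: field_simps)
  qed
  ultimately show ?thesis by (simp add: algebra_simps)
qed

lemma gibbs:
  fixes a b t :: real
  assumes "0 \<le> a" "0 \<le> b" "0 < t"
  shows "PhiL a b \<le> psi a b t"
proof -
  have e1: "1 + 1 / t = (1 + t) / t" using assms by (simp add: field_simps)
  have e2: "1 + t = (1 + t) / 1" by simp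
  have A: "a - (a + b) * t / (t + 1) \<le> a * ln ((t + 1) / t) - a * ln ((a + b) / a)"
    using gibbs_part[of a b t 1] assms by simp
  have B: "b - (b + a) * 1 / (1 + t) \<le> b * ln ((1 + t) / 1) - b * ln ((b + a) / b)"
    using gibbs_part[of b a 1 t] assms by simp
  have n: "1 + t \<noteq> 0" "t + 1 \<noteq> 0" using assms by auto
  have "(a + b) * t / (t + 1) + (b + a) * 1 / (1 + t) = ((a + b) * 1 + (a + b) * t) / (t + 1)"
    by (simp add: add_divide_distrib add.commute)
  also have "\<dots> = (a + b) * (t + 1) / (t + 1)" by (simp add: algebra_simps)
  also have "\<dots> = a + b" using n by simp
  finally have "(a + b) * t / (t + 1) + (b + a) * 1 / (1 + t) = a + b" .
  then show ?thesis using A B unfolding psi_def PhiL_def e1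
    by (simp add: algebra_simps add.commute)
qed


lemma psi_one: "psi a b 1 = (a + b) * ln 2"
  unfolding psi_def by (simp add: algebra_simps)

lemma psi_mono_wrong:
  fixes a b t :: real
  assumes "0 \<le> b" "b \<le> a" "0 < t" "t \<le> 1"
  shows "psi a b 1 \<le> psi a b t"
proof -
  have "1 / 1 \<le> 1 / t" using assms by (intro divide_left_mono) auto
  moreover have "0 < 1 / t" using assms by simp
  then have p1: "0 < 1 + 1 / t" by linarith
  ultimately have l1: "ln 2 \<le> ln (1 + 1 / t)" by (subst ln_le_cancel_iff) auto
  have "(1 + 1 / t) * (1 + t) - 4 = (t - 1)\<^sup>2 / t" using assms
    by (simp add: field_simps power2_eq_square)
  moreover have "(t - 1)\<^sup>2 / t \<ge> 0" using assms by simp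
  ultimately have "4 \<le> (1 + 1 / t) * (1 + t)" by linarith
  then have "ln 4 \<le> ln ((1 + 1 / t) * (1 + t))" using assms by (simp add: ln_le_cancel_iff)
  also have "\<dots> = ln (1 + 1 / t) + ln (1 + t)" using ln_mult[of "1 + 1 / t" "1 + t"] assms p1 by simp
  finally have l2: "2 * ln 2 \<le> ln (1 + 1 / t) + ln (1 + t)"
    using ln_mult[of 2 2] by simp
  have "b * (ln (1 + 1 / t) - ln 2) \<le> a * (ln (1 + 1 / t) - ln 2)"
    using assms l1 by (intro mult_right_mono) auto
  moreover have "0 \<le> b * (ln (1 + 1 / t) + ln (1 + t) - 2 * ln 2)"
    using assms l2 by simp
  ultimately show ?thesis unfolding psi_one psi_def by (simp add: algebra_simps)
qed

lemma psi_drop: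
  fixes a b :: real
  assumes "0 \<le> b" "b \<le> a" "a + b \<le> 1"
  defines "c \<equiv> a - b"
  shows "c\<^sup>2 / 8 \<le> psi a b 1 - psi a b ((1 + c / 4) / (1 - c / 4))"
proof -
  have c: "0 \<le> c" "c \<le> 1" using assms by auto
  have p1: "0 < 1 + c / 4" "0 < 1 - c / 4" using c by auto
  have e1: "1 + 1 / ((1 + c / 4) / (1 - c / 4)) = 2 / (1 + c / 4)" using p1
    by (simp add: field_simps)
  have e2: "1 + (1 + c / 4) / (1 - c / 4) = 2 / (1 - c / 4)" using p1
    by (simp add: field_simps)
  have "psi a b 1 - psi a b ((1 + c / 4) / (1 - c / 4)) = a * ln (1 + c / 4) + b * ln (1 + - (c / 4))"
    unfolding psi_one psi_def e1 e2 using p1 by (simp add: ln_div algebra_simps)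
  moreover have "c / 4 - 2 * (c / 4)\<^sup>2 \<le> ln (1 + c / 4)"
    using abs_ln_one_plus_x_minus_x_bound[of "c / 4"] c by (simp add: abs_le_iff)
  moreover have "- (c / 4) - 2 * (- (c / 4))\<^sup>2 \<le> ln (1 + - (c / 4))"
    using abs_ln_one_plus_x_minus_x_bound[of "- (c / 4)"] c by (simp add: abs_le_iff)
  ultimately have "psi a b 1 - psi a b ((1 + c / 4) / (1 - c / 4)) \<ge>
      a * (c / 4 - 2 * (c / 4)\<^sup>2) + b * (- (c / 4) - 2 * (- (c / 4))\<^sup>2)"
    using assms by (smt (verit) mult_left_mono)
  moreover have "a * (c / 4 - 2 * (c / 4)\<^sup>2) + b * (- (c / 4) - 2 * (- (c / 4))\<^sup>2)
      = c\<^sup>2 / 4 - (a + b) * c\<^sup>2 / 8"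
    unfolding c_def power2_eq_square by (simp add: field_simps)
  moreover have "(a + b) * c\<^sup>2 \<le> c\<^sup>2" using assms mult_right_mono[of "a + b" 1 "c\<^sup>2"] by simp
  ultimately show ?thesis by linarith
qed

lemma lgl_calib_aux:
  fixes a b d \<beta> :: real
  assumes "\<beta> > 0" "0 \<le> b" "b \<le> a" "a + b \<le> 1"
  shows "(wr a b d)\<^sup>2 \<le> 8 * (phi (lgl \<beta>) a b d - PhiL a b)"
proof (cases "d > 0")
  case True
  then have "wr a b d = 0" unfolding wr_def using assms by simp
  moreover have "PhiL a b \<le> phi (lgl \<beta>) a b d" unfolding phi_lgl using assms by (intro gibbs) auto
  ultimately show ?thesis by simp
next
  case False
  define c where "c = a - b"
  define t where "t = exp (\<beta> * d)"
  have t: "0 < t" "t \<le> 1" unfolding t_def using False assms by (auto simp: mult_le_0_iff)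
  have c: "0 \<le> c" "c \<le> 1" using assms unfolding c_def by auto
  have t0: "0 < (1 + c / 4) / (1 - c / 4)" using c by (simp add: divide_pos_pos)
  have "c\<^sup>2 / 8 \<le> psi a b 1 - psi a b ((1 + c / 4) / (1 - c / 4))"
    unfolding c_def by (rule psi_drop) (use assms in auto)
  moreover have "PhiL a b \<le> psi a b ((1 + c / 4) / (1 - c / 4))"
    using assms t0 by (intro gibbs) auto
  moreover have "psi a b 1 \<le> psi a b t" using assms t by (intro psi_mono_wrong) auto
  ultimately have "c\<^sup>2 \<le> 8 * (phi (lgl \<beta>) a b d - PhiL a b)"
    unfolding phi_lgl t_def[symmetric] by argo
  moreover have "(wr a b d)\<^sup>2 \<le> c\<^sup>2"
  proof -
    have "wr a b d \<le> c" using wr_le[of a b d] assms unfolding c_def by simp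
    then show ?thesis using wr_nonneg[of a b d] by (intro power_mono) auto
  qed
  ultimately show ?thesis by linarith
qed

lemma lgl_calib:
  fixes a b d \<beta> :: real
  assumes "\<beta> > 0" "0 \<le> a" "0 \<le> b" "a + b \<le> 1"
  shows "(wr a b d)\<^sup>2 \<le> 8 * (phi (lgl \<beta>) a b d - PhiL a b)"
proof (cases "b \<le> a")
  case True
  then show ?thesis using lgl_calib_aux assms by blast
next
  case False
  then have "(wr b a (-d))\<^sup>2 \<le> 8 * (phi (lgl \<beta>) b a (-d) - PhiL b a)"
    using assms by (intro lgl_calib_aux) auto
  then show ?thesis using wr_swap[of a b d] phi_swap[of "lgl \<beta>" a b d] PhiL_swap[of a b] by simp
qed


definition gsc :: "real \<Rightarrow> real \<Rightarrow> real \<Rightarrow> real" where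
  "gsc \<beta> \<epsilon> z = ln (((1 - \<epsilon>) * z + \<epsilon> / 2) / (1 - ((1 - \<epsilon>) * z + \<epsilon> / 2))) / \<beta>"

lemma part_bound:
  fixes a S Sn an :: real
  assumes "0 \<le> a" "a \<le> S" "0 < Sn" "0 < an" "(1 - \<epsilon>)\<^sup>2 * a \<le> an" "0 \<le> \<epsilon>" "\<epsilon> \<le> 1/4"
  shows "a * ln (Sn / an) - a * ln (S / a) \<le> a * (Sn / S - 1) + a * (4 * \<epsilon>)"
proof (cases "a = 0")
  case True then show ?thesis by simp
next
  case False
  then have a: "0 < a" using assms by simp
  then have S: "0 < S" using assms by simp
  have "ln (Sn / an) - ln (S / a) = ln (Sn / S) + ln (a / an)"
    using a S assms by (simp add: ln_div)
  also have "\<dots> \<le> (Sn / S - 1) + (a / an - 1)"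
    using ln_le_minus_one[of "Sn / S"] ln_le_minus_one[of "a / an"] a S assms by simp
  also have "a / an - 1 \<le> 4 * \<epsilon>"
  proof -
    have q: "0 \<le> 2 - 7 * \<epsilon> + 4 * \<epsilon>\<^sup>2" using assms zero_le_power2[of \<epsilon>] by linarith
    have "(1 + 4 * \<epsilon>) * (1 - \<epsilon>)\<^sup>2 - 1 = \<epsilon> * (2 - 7 * \<epsilon> + 4 * \<epsilon>\<^sup>2)"
      by (simp add: algebra_simps power2_eq_square)
    also have "\<dots> \<ge> 0" using q assms by simp
    finally have "1 \<le> (1 + 4 * \<epsilon>) * (1 - \<epsilon>)\<^sup>2" by simp
    then have "1 * a \<le> ((1 + 4 * \<epsilon>) * (1 - \<epsilon>)\<^sup>2) * a" using a
      by (intro mult_right_mono) auto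
    then have "a \<le> (1 + 4 * \<epsilon>) * ((1 - \<epsilon>)\<^sup>2 * a)" by (simp add: mult.assoc)
    also have "\<dots> \<le> (1 + 4 * \<epsilon>) * an"
      using mult_left_mono[OF assms(5), of "1 + 4 * \<epsilon>"] assms by simp
    finally have "a \<le> (1 + 4 * \<epsilon>) * an" .
    then have "a / an \<le> 1 + 4 * \<epsilon>" using assms by (simp add: divide_le_eq)
    then show ?thesis by simp
  qed
  finally have "ln (Sn / an) - ln (S / a) \<le> (Sn / S - 1) + 4 * \<epsilon>" by simp
  then have "a * (ln (Sn / an) - ln (S / a)) \<le> a * ((Sn / S - 1) + 4 * \<epsilon>)"
    using a by (intro mult_left_mono) auto
  then show ?thesis by (simp add: algebra_simps)
qed

lemma lgl_seq:
  fixes \<beta> \<epsilon> y y' :: real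
  assumes "\<beta> > 0" "0 \<le> y" "y \<le> 1" "0 \<le> y'" "y' \<le> 1" "0 < \<epsilon>" "\<epsilon> \<le> 1/4"
  shows "phi (lgl \<beta>) (y * (1 - y')) (y' * (1 - y)) (gsc \<beta> \<epsilon> y - gsc \<beta> \<epsilon> y')
          - PhiL (y * (1 - y')) (y' * (1 - y)) \<le> 5 * \<epsilon>"
proof -
  define x where "x = (1 - \<epsilon>) * y + \<epsilon> / 2"
  define x' where "x' = (1 - \<epsilon>) * y' + \<epsilon> / 2"
  define a where "a = y * (1 - y')"
  define b where "b = y' * (1 - y)"
  define an where "an = x * (1 - x')"
  define bn where "bn = x' * (1 - x)"
  have ye: "(1 - \<epsilon>) * y \<le> 1 - \<epsilon>" "(1 - \<epsilon>) * y' \<le> 1 - \<epsilon>"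
    using assms mult_left_mono[of y 1 "1 - \<epsilon>"] mult_left_mono[of y' 1 "1 - \<epsilon>"] by simp_all
  have ye0: "0 \<le> (1 - \<epsilon>) * y" "0 \<le> (1 - \<epsilon>) * y'" using assms by simp_all
  have x1: "0 < x" unfolding x_def using assms ye ye0 by linarith
  have x2: "x < 1" unfolding x_def using assms ye ye0 by linarith
  have x3: "0 < x'" unfolding x'_def using assms ye ye0 by linarith
  have x4: "x' < 1" unfolding x'_def using assms ye ye0 by linarith
  note x = x1 x2 x3 x4
  have an: "0 < an" "0 < bn" unfolding an_def bn_def using x by simp_all
  have ab: "0 \<le> a" "0 \<le> b" unfolding a_def b_def using assms by simp_all
  have "\<beta> * (gsc \<beta> \<epsilon> y - gsc \<beta> \<epsilon> y') = ln (x / (1 - x)) - ln (x' / (1 - x'))"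
    unfolding gsc_def x_def[symmetric] x'_def[symmetric] using assms by (simp add: algebra_simps)
  then have "exp (\<beta> * (gsc \<beta> \<epsilon> y - gsc \<beta> \<epsilon> y')) = (x / (1 - x)) / (x' / (1 - x'))"
    using x by (simp add: exp_diff)
  also have "\<dots> = an / bn" unfolding an_def bn_def using x by (simp add: field_simps)
  finally have et: "exp (\<beta> * (gsc \<beta> \<epsilon> y - gsc \<beta> \<epsilon> y')) = an / bn" .
  have psi_eq: "psi a b (an / bn) = a * ln ((an + bn) / an) + b * ln ((an + bn) / bn)"
    unfolding psi_def using an by (simp add: field_simps)
  have Sab: "a + b \<le> 1"
  proof -
    have "0 \<le> (1 - y) * (1 - y')" "0 \<le> y * y'" using assms by simp_all
    moreover have "a + b = 1 - ((1 - y) * (1 - y') + y * y')" unfolding a_def b_def by (simp add: algebra_simps)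
    ultimately show ?thesis by linarith
  qed
  have "(1 - \<epsilon>) * y \<le> x" "(1 - \<epsilon>) * (1 - y') \<le> 1 - x'" unfolding x_def x'_def using assms
    by (simp_all add: algebra_simps)
  then have "((1 - \<epsilon>) * y) * ((1 - \<epsilon>) * (1 - y')) \<le> x * (1 - x')"
    using assms x by (intro mult_mono) auto
  then have an_lb: "(1 - \<epsilon>)\<^sup>2 * a \<le> an" unfolding an_def a_def by (simp add: power2_eq_square algebra_simps)
  have "(1 - \<epsilon>) * y' \<le> x'" "(1 - \<epsilon>) * (1 - y) \<le> 1 - x" unfolding x_def x'_def using assms
    by (simp_all add: algebra_simps)
  then have "((1 - \<epsilon>) * y') * ((1 - \<epsilon>) * (1 - y)) \<le> x' * (1 - x)"
    using assms x by (intro mult_mono) auto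
  then have bn_lb: "(1 - \<epsilon>)\<^sup>2 * b \<le> bn" unfolding bn_def b_def by (simp add: power2_eq_square algebra_simps)
  have Sdiff: "an + bn - (a + b) = ((1 - 2 * y) * (1 - 2 * y')) * ((2 * \<epsilon> - \<epsilon>\<^sup>2) / 2)"
    unfolding an_def bn_def a_def b_def x_def x'_def by (simp add: field_simps power2_eq_square)
  have "\<bar>(1 - 2 * y) * (1 - 2 * y')\<bar> \<le> 1"
    unfolding abs_mult using assms by (intro mult_le_one) auto
  moreover have "0 \<le> (2 * \<epsilon> - \<epsilon>\<^sup>2) / 2" "(2 * \<epsilon> - \<epsilon>\<^sup>2) / 2 \<le> \<epsilon>"
  proof -
    have "\<epsilon> * \<epsilon> \<le> \<epsilon> * 1" using assms by (intro mult_left_mono) auto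
    then show "0 \<le> (2 * \<epsilon> - \<epsilon>\<^sup>2) / 2" "(2 * \<epsilon> - \<epsilon>\<^sup>2) / 2 \<le> \<epsilon>"
      using assms zero_le_power2[of \<epsilon>] by (simp_all add: power2_eq_square)
  qed
  ultimately have "an + bn - (a + b) \<le> \<epsilon>" unfolding Sdiff
  proof -
    let ?P = "(1 - 2 * y) * (1 - 2 * y')" and ?Q = "(2 * \<epsilon> - \<epsilon>\<^sup>2) / 2"
    assume h: "\<bar>?P\<bar> \<le> 1" "0 \<le> ?Q" "?Q \<le> \<epsilon>"
    have "?P * ?Q \<le> \<bar>?P\<bar> * ?Q" using h by (intro mult_right_mono) auto
    also have "\<dots> \<le> 1 * ?Q" using h by (intro mult_right_mono) auto
    finally have "?P * ?Q \<le> ?Q" by simp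
    then show "?P * ?Q \<le> \<epsilon>" using h(3) by (rule order_trans)
  qed
  have T1: "(a + b) * ((an + bn) / (a + b) - 1) \<le> \<epsilon>"
  proof (cases "a + b = 0")
    case True then show ?thesis using assms by simp
  next
    case False
    then have "(a + b) * ((an + bn) / (a + b) - 1) = an + bn - (a + b)" by (simp add: field_simps)
    then show ?thesis using \<open>an + bn - (a + b) \<le> \<epsilon>\<close> by simp
  qed
  have P1: "a * ln ((an + bn) / an) - a * ln ((a + b) / a) \<le> a * ((an + bn) / (a + b) - 1) + a * (4 * \<epsilon>)"
    by (rule part_bound) (use ab an an_lb assms in auto)
  have P2: "b * ln ((an + bn) / bn) - b * ln ((a + b) / b) \<le> b * ((an + bn) / (a + b) - 1) + b * (4 * \<epsilon>)"
    by (rule part_bound) (use ab an bn_lb assms in auto)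
  have "phi (lgl \<beta>) a b (gsc \<beta> \<epsilon> y - gsc \<beta> \<epsilon> y') - PhiL a b
      = (a * ln ((an + bn) / an) - a * ln ((a + b) / a)) + (b * ln ((an + bn) / bn) - b * ln ((a + b) / b))"
    unfolding phi_lgl et psi_eq PhiL_def by simp
  also have "\<dots> \<le> (a + b) * ((an + bn) / (a + b) - 1) + (a + b) * (4 * \<epsilon>)"
    using P1 P2 distrib_right[of a b "(an + bn) / (a + b) - 1"] distrib_right[of a b "4 * \<epsilon>"]
    by linarith
  also have "\<dots> \<le> \<epsilon> + 1 * (4 * \<epsilon>)"
    using T1 Sab assms ab by (intro add_mono mult_right_mono) auto
  finally show ?thesis unfolding a_def b_def by simp
qed


definition ind :: "bool \<Rightarrow> 'a \<times> bool \<Rightarrow> real" where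
  "ind u z = (if snd z = u then 1 else 0)"

definition th :: "('a \<Rightarrow> real) \<Rightarrow> bool \<Rightarrow> 'a \<Rightarrow> real" where
  "th \<eta> u y = (if u then \<eta> y else 1 - \<eta> y)"

locale auc_setting =
  fixes M :: "'a measure" and D :: "('a \<times> bool) measure" and \<eta> :: "'a \<Rightarrow> real"
  assumes D: "prob_space D" and sD: "sets D = sets (M \<Otimes>\<^sub>M count_space UNIV)"
    and cp: "is_cond_pos M D \<eta>"
begin

definition "\<mu> = distr D M fst"

lemma eta_meas[measurable]: "\<eta> \<in> borel_measurable M"
  using cp unfolding is_cond_pos_def by simp

lemma eta_rng: "y \<in> space M \<Longrightarrow> 0 \<le> \<eta> y \<and> \<eta> y \<le> 1"
  using cp unfolding is_cond_pos_def by simp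

lemma eta_set: "A \<in> sets M \<Longrightarrow> measure D (A \<times> {True}) = (\<integral>y. indicator A y * \<eta> y \<partial>\<mu>)"
  using cp unfolding is_cond_pos_def \<mu>_def by simp

lemma spD: "space D = space M \<times> UNIV"
  using sets_eq_imp_space_eq[OF sD] by (simp add: space_pair_measure)

lemma measD: "measurable D N = measurable (M \<Otimes>\<^sub>M count_space UNIV) N"
  by (rule measurable_cong_sets[OF sD refl])

lemma fst_meas[measurable]: "fst \<in> measurable D M"
  unfolding measD by simp

lemma mu_prob: "prob_space \<mu>"
  unfolding \<mu>_def by (rule prob_space.prob_space_distr[OF D fst_meas])

lemma sets_mu[simp]: "sets \<mu> = sets M" and space_mu[simp]: "space \<mu> = space M"
  unfolding \<mu>_def by auto

lemma meas_mu: "measurable \<mu> N = measurable M N"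
  by (rule measurable_cong_sets) auto

lemma th_rng: "y \<in> space M \<Longrightarrow> 0 \<le> th \<eta> u y \<and> th \<eta> u y \<le> 1"
  using eta_rng[of y] unfolding th_def by auto

lemma th_meas[measurable]: "th \<eta> u \<in> borel_measurable M"
  unfolding th_def by (cases u) auto

lemma ind_meas[measurable]: "ind u \<in> borel_measurable D"
  unfolding measD ind_def by measurable

lemma set_in_D: "A \<in> sets M \<Longrightarrow> A \<times> B \<in> sets D"
  unfolding sD by (intro pair_measureI) auto

lemma measure_th: assumes A: "A \<in> sets M"
  shows "measure D (A \<times> {u}) = (\<integral>y. indicator A y * th \<eta> u y \<partial>\<mu>)"
proof (cases u)
  case True then show ?thesis using eta_set[OF A] by (simp add: th_def)
next
  case False
  interpret D: prob_space D by (rule D)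
  interpret mu: prob_space \<mu> by (rule mu_prob)
  have "A \<times> UNIV - A \<times> {True} = A \<times> {False}" by auto
  then have "measure D (A \<times> {False}) = measure D (A \<times> UNIV) - measure D (A \<times> {True})"
    using measure_Diff[of D "A \<times> UNIV" "A \<times> {True}"] set_in_D[OF A] D.emeasure_finite by auto
  moreover have "measure D (A \<times> UNIV) = measure \<mu> A"
  proof -
    have "fst -` A \<inter> space D = A \<times> UNIV" using sets.sets_into_space[OF A] spD by auto
    then show ?thesis unfolding \<mu>_def using A by (simp add: measure_distr)
  qed
  moreover have "measure \<mu> A = (\<integral>y. indicator A y \<partial>\<mu>)" using A by simp
  moreover have "(\<integral>y. indicator A y * (1 - \<eta> y) \<partial>\<mu>) = (\<integral>y. indicator A y \<partial>\<mu>) - (\<integral>y. indicator A y * \<eta> y \<partial>\<mu>)"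
  proof -
    have i1: "integrable \<mu> (\<lambda>y. indicator A y :: real)" using A by (intro mu.integrable_const_bound[where B=1]) (auto simp: meas_mu)
    have [measurable]: "A \<in> sets M" by (rule A)
    have m: "(\<lambda>y. indicator A y * \<eta> y) \<in> borel_measurable \<mu>" unfolding meas_mu by measurable
    have i2: "integrable \<mu> (\<lambda>y. indicator A y * \<eta> y)"
      by (intro mu.integrable_const_bound[where B=1] m)
         (auto simp: eta_rng indicator_def intro!: AE_I2)
    show ?thesis using Bochner_Integration.integral_diff[OF i1 i2] by (simp add: algebra_simps)
  qed
  ultimately show ?thesis using False eta_set[OF A] by (simp add: th_def)
qed

lemma sets_dens[simp]: "sets (density D (\<lambda>z. ennreal (ind u z))) = sets D" by simp

lemma meas_dens: "measurable (density D (\<lambda>z. ennreal (ind u z))) N = measurable (M \<Otimes>\<^sub>M count_space UNIV) N"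
  using measD by (simp add: measurable_cong_sets[OF sets_dens refl])

lemma dens_marg:
  "distr (density D (\<lambda>z. ennreal (ind u z))) M fst = density \<mu> (\<lambda>y. ennreal (th \<eta> u y))"
proof (rule measure_eqI)
  interpret D: prob_space D by (rule D)
  interpret mu: prob_space \<mu> by (rule mu_prob)
  show "sets (distr (density D (\<lambda>z. ennreal (ind u z))) M fst) = sets (density \<mu> (\<lambda>y. ennreal (th \<eta> u y)))"
    by simp
  fix A assume "A \<in> sets (distr (density D (\<lambda>z. ennreal (ind u z))) M fst)"
  then have A[measurable]: "A \<in> sets M" by simp
  have fm: "fst \<in> measurable (density D (\<lambda>z. ennreal (ind u z))) M" unfolding meas_dens by simp
  have pre: "fst -` A \<inter> space D = A \<times> UNIV" using sets.sets_into_space[OF A] spD by auto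
  have "emeasure (distr (density D (\<lambda>z. ennreal (ind u z))) M fst) A
      = emeasure (density D (\<lambda>z. ennreal (ind u z))) (A \<times> UNIV)"
    using emeasure_distr[OF fm A] pre by simp
  also have "\<dots> = (\<integral>\<^sup>+ z. ennreal (ind u z) * indicator (A \<times> UNIV) z \<partial>D)"
    using set_in_D[OF A, of UNIV] by (intro emeasure_density) auto
  also have "\<dots> = (\<integral>\<^sup>+ z. indicator (A \<times> {u}) z \<partial>D)"
    by (intro nn_integral_cong) (auto simp: ind_def indicator_def)
  also have "\<dots> = emeasure D (A \<times> {u})" using set_in_D[OF A, of "{u}"] by simp
  also have "\<dots> = ennreal (measure D (A \<times> {u}))" by (simp add: D.emeasure_eq_measure)
  also have "\<dots> = ennreal (\<integral>y. indicator A y * th \<eta> u y \<partial>\<mu>)" using measure_th[OF A] by simp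
  also have "\<dots> = (\<integral>\<^sup>+ y. ennreal (indicator A y * th \<eta> u y) \<partial>\<mu>)"
  proof -
    have m: "(\<lambda>y. indicator A y * th \<eta> u y) \<in> borel_measurable \<mu>" unfolding meas_mu by measurable
    have i: "integrable \<mu> (\<lambda>y. indicator A y * th \<eta> u y)"
      by (intro mu.integrable_const_bound[where B=1] m)
         (auto simp: th_rng indicator_def intro!: AE_I2)
    show ?thesis
      by (rule nn_integral_eq_integral[OF i, symmetric]) (auto simp: th_rng intro!: AE_I2)
  qed
  also have "\<dots> = (\<integral>\<^sup>+ y. ennreal (th \<eta> u y) * indicator A y \<partial>\<mu>)"
    by (intro nn_integral_cong) (auto simp: indicator_def)
  also have "\<dots> = emeasure (density \<mu> (\<lambda>y. ennreal (th \<eta> u y))) A"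
    by (rule emeasure_density[symmetric]) (auto simp: meas_mu)
  finally show "emeasure (distr (density D (\<lambda>z. ennreal (ind u z))) M fst) A
      = emeasure (density \<mu> (\<lambda>y. ennreal (th \<eta> u y))) A" .
qed

lemma sf_D: "sigma_finite_measure D"
  using D by (simp add: prob_space_imp_sigma_finite)

lemma sf_mu: "sigma_finite_measure \<mu>"
  using mu_prob by (simp add: prob_space_imp_sigma_finite)

lemma sf_dens: "sigma_finite_measure (density D (\<lambda>z. ennreal (ind u z)))"
  using sigma_finite_measure.sigma_finite_iff_density_finite[OF sf_D, of "\<lambda>z. ennreal (ind u z)"] by simp

lemma sf_dens_mu: "sigma_finite_measure (density \<mu> (\<lambda>y. ennreal (th \<eta> u y)))"
  using sigma_finite_measure.sigma_finite_iff_density_finite[OF sf_mu, of "\<lambda>y. ennreal (th \<eta> u y)"]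
  by (simp add: meas_mu)

lemma pair_int:
  fixes f :: "'a \<times> 'a \<Rightarrow> real"
  assumes f[measurable]: "f \<in> borel_measurable (M \<Otimes>\<^sub>M M)"
  shows "(\<integral>p. ind u (fst p) * ind v (snd p) * f (fst (fst p), fst (snd p)) \<partial>(D \<Otimes>\<^sub>M D))
       = (\<integral>q. th \<eta> u (fst q) * th \<eta> v (snd q) * f q \<partial>(\<mu> \<Otimes>\<^sub>M \<mu>))"
proof -
  let ?Du = "density D (\<lambda>z. ennreal (ind u z))" and ?Dv = "density D (\<lambda>z. ennreal (ind v z))"
  let ?g = "\<lambda>p. f (fst (fst p), fst (snd p))"
  let ?F = "\<lambda>p. ind u (fst p) * ind v (snd p)"
  let ?G = "\<lambda>q. th \<eta> u (fst q) * th \<eta> v (snd q)"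
  have ind_nn: "0 \<le> ind w z" for w z by (simp add: ind_def)
  have mDD: "measurable (D \<Otimes>\<^sub>M D) N = measurable ((M \<Otimes>\<^sub>M count_space UNIV) \<Otimes>\<^sub>M (M \<Otimes>\<^sub>M count_space UNIV)) N" for N :: "'c measure"
    by (intro measurable_cong_sets sets_pair_measure_cong sD refl)
  have mDuv: "measurable (?Du \<Otimes>\<^sub>M ?Dv) N = measurable ((M \<Otimes>\<^sub>M count_space UNIV) \<Otimes>\<^sub>M (M \<Otimes>\<^sub>M count_space UNIV)) N" for N :: "'c measure"
    by (intro measurable_cong_sets sets_pair_measure_cong) (auto simp: sD)
  have Fm: "?F \<in> borel_measurable (D \<Otimes>\<^sub>M D)" unfolding mDD ind_def by measurable
  have gm: "?g \<in> borel_measurable (D \<Otimes>\<^sub>M D)" unfolding mDD by measurable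
  have hm: "(\<lambda>(x, y). (fst x, fst y)) \<in> measurable (?Du \<Otimes>\<^sub>M ?Dv) (M \<Otimes>\<^sub>M M)"
    unfolding mDuv by measurable
  have "(\<integral>p. ?F p * ?g p \<partial>(D \<Otimes>\<^sub>M D)) = (\<integral>p. ?g p \<partial>density (D \<Otimes>\<^sub>M D) (\<lambda>p. ennreal (?F p)))"
    by (subst integral_density) (auto simp: Fm gm ind_nn intro!: AE_I2)
  also have "density (D \<Otimes>\<^sub>M D) (\<lambda>p. ennreal (?F p)) = ?Du \<Otimes>\<^sub>M ?Dv"
  proof -
    have "?Du \<Otimes>\<^sub>M ?Dv = density (D \<Otimes>\<^sub>M D) (\<lambda>(x, y). ennreal (ind u x) * ennreal (ind v y))"
      by (rule pair_measure_density[OF _ _ sf_D sf_dens]) measurable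
    also have "(\<lambda>(x, y). ennreal (ind u x) * ennreal (ind v y)) = (\<lambda>p. ennreal (?F p))"
      by (auto simp: ind_def)
    finally show ?thesis by simp
  qed
  also have "(\<integral>p. ?g p \<partial>(?Du \<Otimes>\<^sub>M ?Dv)) = (\<integral>p. f ((\<lambda>(x, y). (fst x, fst y)) p) \<partial>(?Du \<Otimes>\<^sub>M ?Dv))"
    by (simp add: case_prod_beta)
  also have "\<dots> = (\<integral>q. f q \<partial>distr (?Du \<Otimes>\<^sub>M ?Dv) (M \<Otimes>\<^sub>M M) (\<lambda>(x, y). (fst x, fst y)))"
    by (rule integral_distr[OF hm f, symmetric])
  also have "distr (?Du \<Otimes>\<^sub>M ?Dv) (M \<Otimes>\<^sub>M M) (\<lambda>(x, y). (fst x, fst y))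
      = distr ?Du M fst \<Otimes>\<^sub>M distr ?Dv M fst"
    by (rule pair_measure_distr[symmetric]) (auto simp: meas_dens dens_marg sf_dens_mu)
  also have "\<dots> = density \<mu> (\<lambda>y. ennreal (th \<eta> u y)) \<Otimes>\<^sub>M density \<mu> (\<lambda>y. ennreal (th \<eta> v y))"
    by (simp add: dens_marg)
  also have "\<dots> = density (\<mu> \<Otimes>\<^sub>M \<mu>) (\<lambda>(x, y). ennreal (th \<eta> u x) * ennreal (th \<eta> v y))"
    by (rule pair_measure_density) (auto simp: sf_mu sf_dens_mu meas_mu)
  also have "\<dots> = density (\<mu> \<Otimes>\<^sub>M \<mu>) (\<lambda>q. ennreal (?G q))"
  proof (rule density_cong)
    have mP: "measurable (\<mu> \<Otimes>\<^sub>M \<mu>) N = measurable (M \<Otimes>\<^sub>M M) N" for N :: "'c measure"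
      by (intro measurable_cong_sets sets_pair_measure_cong) auto
    show "(\<lambda>(x, y). ennreal (th \<eta> u x) * ennreal (th \<eta> v y)) \<in> borel_measurable (\<mu> \<Otimes>\<^sub>M \<mu>)"
      unfolding mP by measurable
    show "(\<lambda>q. ennreal (?G q)) \<in> borel_measurable (\<mu> \<Otimes>\<^sub>M \<mu>)"
      unfolding mP by measurable
    show "AE q in \<mu> \<Otimes>\<^sub>M \<mu>. (case q of (x, y) \<Rightarrow> ennreal (th \<eta> u x) * ennreal (th \<eta> v y)) = ennreal (?G q)"
      by (intro AE_I2) (auto simp: space_pair_measure th_rng ennreal_mult)
  qed
  also have "(\<integral>q. f q \<partial>density (\<mu> \<Otimes>\<^sub>M \<mu>) (\<lambda>q. ennreal (?G q))) = (\<integral>q. ?G q * f q \<partial>(\<mu> \<Otimes>\<^sub>M \<mu>))"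
  proof -
    have mP: "measurable (\<mu> \<Otimes>\<^sub>M \<mu>) N = measurable (M \<Otimes>\<^sub>M M) N" for N :: "'c measure"
      by (intro measurable_cong_sets sets_pair_measure_cong) auto
    have Gm: "?G \<in> borel_measurable (\<mu> \<Otimes>\<^sub>M \<mu>)" unfolding mP by measurable
    have fm: "f \<in> borel_measurable (\<mu> \<Otimes>\<^sub>M \<mu>)" unfolding mP by measurable
    show ?thesis
      by (subst integral_density) (auto simp: Gm fm space_pair_measure th_rng intro!: AE_I2)
  qed
  finally show ?thesis by (simp add: mult.assoc)
qed

end

context auc_setting
begin

abbreviation "P \<equiv> \<mu> \<Otimes>\<^sub>M \<mu>"

definition A :: "'a \<times> 'a \<Rightarrow> real" where "A q = \<eta> (fst q) * (1 - \<eta> (snd q))"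
definition B :: "'a \<times> 'a \<Rightarrow> real" where "B q = \<eta> (snd q) * (1 - \<eta> (fst q))"
definition dd :: "('a \<Rightarrow> real) \<Rightarrow> 'a \<times> 'a \<Rightarrow> real" where "dd s q = s (fst q) - s (snd q)"

lemma mP: "measurable P N = measurable (M \<Otimes>\<^sub>M M) N"
  by (intro measurable_cong_sets sets_pair_measure_cong) auto

lemma space_P: "space P = space M \<times> space M" by (simp add: space_pair_measure)

lemma P_prob: "prob_space P" using mu_prob by (intro prob_space_pair)

lemma A_meas[measurable]: "A \<in> borel_measurable (M \<Otimes>\<^sub>M M)" unfolding A_def by measurable
lemma B_meas[measurable]: "B \<in> borel_measurable (M \<Otimes>\<^sub>M M)" unfolding B_def by measurable
lemma dd_meas[measurable]: assumes [measurable]: "s \<in> borel_measurable M"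
  shows "dd s \<in> borel_measurable (M \<Otimes>\<^sub>M M)"
  unfolding dd_def by measurable

lemma AB_rng: assumes "q \<in> space P"
  shows "0 \<le> A q" "A q \<le> 1" "0 \<le> B q" "B q \<le> 1" "A q + B q \<le> 1"
proof -
  obtain x y where q: "q = (x, y)" "x \<in> space M" "y \<in> space M" using assms by (auto simp: space_P)
  have ex: "0 \<le> \<eta> x" "\<eta> x \<le> 1" and ey: "0 \<le> \<eta> y" "\<eta> y \<le> 1" using eta_rng q by auto
  show "0 \<le> A q" "0 \<le> B q" unfolding A_def B_def q using ex ey by simp_all
  show "A q \<le> 1" unfolding A_def q using ex ey by (simp add: mult_le_one)
  show "B q \<le> 1" unfolding B_def q using ex ey by (simp add: mult_le_one)
  have "0 \<le> (1 - \<eta> x) * (1 - \<eta> y)" "0 \<le> \<eta> x * \<eta> y" using ex ey by simp_all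
  moreover have "A q + B q = 1 - ((1 - \<eta> x) * (1 - \<eta> y) + \<eta> x * \<eta> y)"
    unfolding A_def B_def q by (simp add: algebra_simps)
  ultimately show "A q + B q \<le> 1" by linarith
qed

lemma intP: fixes f :: "_ \<Rightarrow> real" and C :: real assumes "f \<in> borel_measurable (M \<Otimes>\<^sub>M M)" "\<And>q. q \<in> space P \<Longrightarrow> \<bar>f q\<bar> \<le> C"
  shows "integrable P f"
proof -
  interpret p: prob_space P by (rule P_prob)
  show ?thesis using assms unfolding mP[symmetric]
    by (intro p.integrable_const_bound[where B=C]) (auto intro!: AE_I2)
qed

lemma intDD: fixes f :: "_ \<Rightarrow> real" and C :: real assumes "f \<in> borel_measurable (D \<Otimes>\<^sub>M D)" "\<And>q. \<bar>f q\<bar> \<le> C"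
  shows "integrable (D \<Otimes>\<^sub>M D) f"
proof -
  interpret p: prob_space "D \<Otimes>\<^sub>M D" using D by (intro prob_space_pair)
  show ?thesis using assms
    by (intro p.integrable_const_bound[where B=C]) (auto intro!: AE_I2)
qed

lemma mDD: "measurable (D \<Otimes>\<^sub>M D) N = measurable ((M \<Otimes>\<^sub>M count_space UNIV) \<Otimes>\<^sub>M (M \<Otimes>\<^sub>M count_space UNIV)) N"
  by (intro measurable_cong_sets sets_pair_measure_cong sD refl)

definition F1 :: "('a \<Rightarrow> real) \<Rightarrow> 'a \<times> 'a \<Rightarrow> real" where
  "F1 s q = (if s (fst q) - s (snd q) < 0 then 1 else 0) + (if s (fst q) = s (snd q) then 1/2 else 0)"
definition F2 :: "('a \<Rightarrow> real) \<Rightarrow> 'a \<times> 'a \<Rightarrow> real" where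
  "F2 s q = (if s (fst q) - s (snd q) > 0 then 1 else 0) + (if s (fst q) = s (snd q) then 1/2 else 0)"

lemma F_meas[measurable]: assumes [measurable]: "s \<in> borel_measurable M"
  shows "F1 s \<in> borel_measurable (M \<Otimes>\<^sub>M M)" "F2 s \<in> borel_measurable (M \<Otimes>\<^sub>M M)"
  unfolding F1_def F2_def by measurable

lemma bnd12: "0 \<le> (a::real) \<Longrightarrow> a \<le> 1 \<Longrightarrow> \<bar>b\<bar> \<le> c \<Longrightarrow> \<bar>a * b\<bar> \<le> c"
  unfolding abs_mult using mult_mono[of a 1 "\<bar>b\<bar>" c] by auto

lemma F_bnd: "\<bar>F1 s q\<bar> \<le> 2" "\<bar>F2 s q\<bar> \<le> 2" unfolding F1_def F2_def by auto

lemma thA: "th \<eta> True (fst q) * th \<eta> False (snd q) = A q" unfolding th_def A_def by simp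
lemma thB: "th \<eta> False (fst q) * th \<eta> True (snd q) = B q" unfolding th_def B_def by (simp add: mult.commute)

lemma auc_num:
  assumes s[measurable]: "s \<in> borel_measurable M"
  shows "(\<integral>p. auc_loss s (fst p) (snd p) * indicator {p. snd (fst p) \<noteq> snd (snd p)} p \<partial>(D \<Otimes>\<^sub>M D))
       = (\<integral>q. A q * F1 s q + B q * F2 s q \<partial>P)"
proof -
  let ?g1 = "\<lambda>p. ind True (fst p) * ind False (snd p) * F1 s (fst (fst p), fst (snd p))"
  let ?g2 = "\<lambda>p. ind False (fst p) * ind True (snd p) * F2 s (fst (fst p), fst (snd p))"
  have eq: "auc_loss s (fst p) (snd p) * indicator {p. snd (fst p) \<noteq> snd (snd p)} p = ?g1 p + ?g2 p" for p
    by (cases "snd (fst p)"; cases "snd (snd p)")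
       (auto simp: auc_loss_def lab_def ind_def F1_def F2_def indicator_def)
  have m1: "?g1 \<in> borel_measurable (D \<Otimes>\<^sub>M D)" unfolding mDD ind_def by measurable
  have m2: "?g2 \<in> borel_measurable (D \<Otimes>\<^sub>M D)" unfolding mDD ind_def by measurable
  have i1: "integrable (D \<Otimes>\<^sub>M D) ?g1" by (rule intDD[OF m1, of 2]) (auto simp: ind_def F1_def)
  have i2: "integrable (D \<Otimes>\<^sub>M D) ?g2" by (rule intDD[OF m2, of 2]) (auto simp: ind_def F2_def)
  have j1: "integrable P (\<lambda>q. A q * F1 s q)"
    by (rule intP[of _ 2]) (auto simp: AB_rng F_bnd intro!: bnd12)
  have j2: "integrable P (\<lambda>q. B q * F2 s q)"
    by (rule intP[of _ 2]) (auto simp: AB_rng F_bnd intro!: bnd12)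
  have "(\<integral>p. auc_loss s (fst p) (snd p) * indicator {p. snd (fst p) \<noteq> snd (snd p)} p \<partial>(D \<Otimes>\<^sub>M D))
      = (\<integral>p. ?g1 p \<partial>(D \<Otimes>\<^sub>M D)) + (\<integral>p. ?g2 p \<partial>(D \<Otimes>\<^sub>M D))"
    unfolding eq by (rule Bochner_Integration.integral_add[OF i1 i2])
  also have "\<dots> = (\<integral>q. A q * F1 s q \<partial>P) + (\<integral>q. B q * F2 s q \<partial>P)"
    using pair_int[of "F1 s" True False] pair_int[of "F2 s" False True] by (simp add: thA thB)
  also have "\<dots> = (\<integral>q. A q * F1 s q + B q * F2 s q \<partial>P)"
    by (rule Bochner_Integration.integral_add[OF j1 j2, symmetric])
  finally show ?thesis .
qed

lemma auc_den:
  "measure (D \<Otimes>\<^sub>M D) {p \<in> space (D \<Otimes>\<^sub>M D). snd (fst p) \<noteq> snd (snd p)} = (\<integral>q. A q + B q \<partial>P)"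
proof -
  let ?S = "{p \<in> space (D \<Otimes>\<^sub>M D). snd (fst p) \<noteq> snd (snd p)}"
  let ?g1 = "\<lambda>p. ind True (fst p) * ind False (snd p) * (\<lambda>q. 1::real) (fst (fst p), fst (snd p))"
  let ?g2 = "\<lambda>p. ind False (fst p) * ind True (snd p) * (\<lambda>q. 1::real) (fst (fst p), fst (snd p))"
  have "measure (D \<Otimes>\<^sub>M D) ?S = (\<integral>p. indicator ?S p \<partial>(D \<Otimes>\<^sub>M D))"
    by (simp add: Int_absorb2)
  also have "\<dots> = (\<integral>p. ?g1 p + ?g2 p \<partial>(D \<Otimes>\<^sub>M D))"
    by (intro Bochner_Integration.integral_cong refl)
       (auto simp: ind_def indicator_def split: if_splits)
  also have "\<dots> = (\<integral>p. ?g1 p \<partial>(D \<Otimes>\<^sub>M D)) + (\<integral>p. ?g2 p \<partial>(D \<Otimes>\<^sub>M D))"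
  proof (rule Bochner_Integration.integral_add)
    show "integrable (D \<Otimes>\<^sub>M D) ?g1" by (rule intDD[of _ 1]) (auto simp: mDD ind_def)
    show "integrable (D \<Otimes>\<^sub>M D) ?g2" by (rule intDD[of _ 1]) (auto simp: mDD ind_def)
  qed
  also have "\<dots> = (\<integral>q. A q \<partial>P) + (\<integral>q. B q \<partial>P)"
    using pair_int[of "\<lambda>q. 1" True False] pair_int[of "\<lambda>q. 1" False True] by (simp add: thA thB)
  also have "\<dots> = (\<integral>q. A q + B q \<partial>P)"
    by (rule Bochner_Integration.integral_add[symmetric]; rule intP[of _ 1]) (auto simp: AB_rng)
  finally show ?thesis .
qed

lemma FW: "A q * F1 s q + B q * F2 s q = min (A q) (B q) + wr (A q) (B q) (dd s q)"
  unfolding F1_def F2_def wr_def dd_def by (auto simp: min_def field_simps)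

lemma auc_formula:
  assumes s[measurable]: "s \<in> borel_measurable M"
  shows "auc_risk D s = ((\<integral>q. min (A q) (B q) \<partial>P) + (\<integral>q. wr (A q) (B q) (dd s q) \<partial>P)) / (\<integral>q. A q + B q \<partial>P)"
proof -
  have "(\<integral>q. A q * F1 s q + B q * F2 s q \<partial>P) = (\<integral>q. min (A q) (B q) + wr (A q) (B q) (dd s q) \<partial>P)"
    unfolding FW ..
  also have "\<dots> = (\<integral>q. min (A q) (B q) \<partial>P) + (\<integral>q. wr (A q) (B q) (dd s q) \<partial>P)"
  proof (rule Bochner_Integration.integral_add)
    show "integrable P (\<lambda>q. min (A q) (B q))"
      by (rule intP[of _ 1]) (auto simp: AB_rng min_def dest: AB_rng)
    show "integrable P (\<lambda>q. wr (A q) (B q) (dd s q))"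
    proof (rule intP[of _ 1])
      show "(\<lambda>q. wr (A q) (B q) (dd s q)) \<in> borel_measurable (M \<Otimes>\<^sub>M M)" unfolding wr_def by measurable
      fix q assume "q \<in> space P"
      then show "\<bar>wr (A q) (B q) (dd s q)\<bar> \<le> 1"
        using wr_le[of "A q" "B q" "dd s q"] wr_nonneg[of "A q" "B q" "dd s q"] AB_rng[of q] by auto
    qed
  qed
  finally show ?thesis unfolding auc_risk_def auc_num[OF s] auc_den by simp
qed

lemma surr_formula:
  "surr_risk L M D \<eta> s = ext_integral P (\<lambda>q. phi L (A q) (B q) (dd s q))"
proof -
  have "(\<lambda>(y, y'). \<eta> y * (1 - \<eta> y') * L (s y - s y') + \<eta> y' * (1 - \<eta> y) * L (s y' - s y))
      = (\<lambda>q. phi L (A q) (B q) (dd s q))"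
    by (auto simp: phi_def A_def B_def dd_def)
  then show ?thesis unfolding surr_risk_def \<mu>_def[symmetric] by simp
qed

end

context auc_setting
begin

lemma wr_quad:
  fixes w X K \<delta> :: real
  assumes "w\<^sup>2 \<le> K * X" "\<delta> > 0" "K > 0"
  shows "w \<le> \<delta> + (K / (4 * \<delta>)) * X"
proof -
  have "0 \<le> (w - 2 * \<delta>)\<^sup>2" by simp
  then have "4 * \<delta> * w \<le> w\<^sup>2 + 4 * \<delta>\<^sup>2" by (simp add: power2_eq_square algebra_simps)
  also have "\<dots> \<le> K * X + 4 * \<delta>\<^sup>2" using assms by simp
  finally have "4 * \<delta> * w \<le> K * X + 4 * \<delta>\<^sup>2" .
  then have "w \<le> (K * X + 4 * \<delta>\<^sup>2) / (4 * \<delta>)" using assms by (simp add: le_divide_eq mult.commute)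
  also have "\<dots> = \<delta> + (K / (4 * \<delta>)) * X" using assms by (simp add: field_simps power2_eq_square)
  finally show ?thesis .
qed

lemma consistency:
  fixes L :: "real \<Rightarrow> real" and \<Phi> :: "real \<Rightarrow> real \<Rightarrow> real" and K :: real
    and s :: "nat \<Rightarrow> 'a \<Rightarrow> real"
  assumes Lm[measurable]: "L \<in> borel_measurable borel"
    and \<Phi>m[measurable]: "(\<lambda>q. \<Phi> (A q) (B q)) \<in> borel_measurable (M \<Otimes>\<^sub>M M)"
    and H1: "\<And>a b d. 0 \<le> a \<Longrightarrow> a \<le> 1 \<Longrightarrow> 0 \<le> b \<Longrightarrow> b \<le> 1 \<Longrightarrow> a + b \<le> 1 \<Longrightarrow> \<Phi> a b \<le> phi L a b d"
    and K: "K > 0"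
    and H2: "\<And>a b d. 0 \<le> a \<Longrightarrow> a \<le> 1 \<Longrightarrow> 0 \<le> b \<Longrightarrow> b \<le> 1 \<Longrightarrow> a + b \<le> 1 \<Longrightarrow>
               (wr a b d)\<^sup>2 \<le> K * (phi L a b d - \<Phi> a b)"
    and Hrisk: "\<And>s. s \<in> borel_measurable M \<Longrightarrow> surr_risk L M D \<eta> s =
       ereal (\<integral>q. \<Phi> (A q) (B q) \<partial>P) + enn2ereal (\<integral>\<^sup>+q. ennreal (phi L (A q) (B q) (dd s q) - \<Phi> (A q) (B q)) \<partial>P)"
    and H3: "\<And>r. r > 0 \<Longrightarrow> \<exists>s\<in>borel_measurable M. \<forall>q\<in>space P. phi L (A q) (B q) (dd s q) - \<Phi> (A q) (B q) \<le> r"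
    and sm: "\<And>i. s i \<in> borel_measurable M"
    and conv: "(\<lambda>i. surr_risk L M D \<eta> (s i)) \<longlonglongrightarrow> surr_bayes L M D \<eta>"
  shows "(\<lambda>i. auc_risk D (s i)) \<longlonglongrightarrow> auc_bayes M D"
proof -
  interpret p: prob_space P by (rule P_prob)
  define c where "c = (\<integral>q. \<Phi> (A q) (B q) \<partial>P)"
  define Dl where "Dl t q = phi L (A q) (B q) (dd t q) - \<Phi> (A q) (B q)" for t q
  define N where "N t = (\<integral>\<^sup>+q. ennreal (Dl t q) \<partial>P)" for t
  have risk: "surr_risk L M D \<eta> t = ereal c + enn2ereal (N t)" if "t \<in> borel_measurable M" for t
    using Hrisk[OF that] unfolding c_def N_def Dl_def by simp
  have Dl_nn: "0 \<le> Dl t q" if "q \<in> space P" for t q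
    using H1[of "A q" "B q"] AB_rng[OF that] unfolding Dl_def by simp
  have Dl_meas: "(\<lambda>q. Dl t q) \<in> borel_measurable P" if [measurable]: "t \<in> borel_measurable M" for t
    unfolding mP Dl_def phi_def by measurable
  have bayes: "surr_bayes L M D \<eta> = ereal c"
  proof (rule antisym)
    show "surr_bayes L M D \<eta> \<le> ereal c"
    proof (rule ereal_le_epsilon2)
      fix e :: real assume e: "0 < e"
      obtain t where t: "t \<in> borel_measurable M" "\<forall>q\<in>space P. Dl t q \<le> e"
        using H3[OF e] unfolding Dl_def by blast
      have "N t \<le> (\<integral>\<^sup>+q. ennreal e \<partial>P)" unfolding N_def
        using t by (intro nn_integral_mono ennreal_leI) blast
      also have "\<dots> = ennreal e" by (simp add: p.emeasure_space_1)
      finally have "enn2ereal (N t) \<le> ereal e"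
        using e by (metis enn2ereal_ennreal less_eq_ennreal.rep_eq less_imp_le)
      then have "ereal c + enn2ereal (N t) \<le> ereal c + ereal e" by (rule add_left_mono)
      then have "surr_risk L M D \<eta> t \<le> ereal c + ereal e" by (simp only: risk[OF t(1)])
      moreover have "surr_bayes L M D \<eta> \<le> surr_risk L M D \<eta> t"
        unfolding surr_bayes_def using t(1) by (rule INF_lower)
      ultimately show "surr_bayes L M D \<eta> \<le> ereal c + ereal e" by (rule order_trans[rotated])
    qed
    show "ereal c \<le> surr_bayes L M D \<eta>"
      unfolding surr_bayes_def
    proof (rule INF_greatest)
      fix t :: "'a \<Rightarrow> real" assume "t \<in> borel_measurable M"
      then show "ereal c \<le> surr_risk L M D \<eta> t" using risk by (simp add: add_increasing2)
    qed
  qed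
  have evN: "\<forall>\<^sub>F i in sequentially. N (s i) < ennreal r" if r: "r > 0" for r
  proof -
    have "ereal c < ereal (c + r)" using r by simp
    from order_tendstoD(2)[OF conv[unfolded bayes] this]
    have "\<forall>\<^sub>F i in sequentially. surr_risk L M D \<eta> (s i) < ereal (c + r)" .
    then show ?thesis
    proof (rule eventually_mono)
      fix i assume "surr_risk L M D \<eta> (s i) < ereal (c + r)"
      then have "ereal c + enn2ereal (N (s i)) < ereal (c + r)" using risk[OF sm] by simp
      then have "enn2ereal (N (s i)) < ereal r"
        by (cases "enn2ereal (N (s i))") auto
      then show "N (s i) < ennreal r"
        using r by (metis enn2ereal_ennreal less_ennreal.rep_eq less_imp_le)
    qed
  qed
  define E where "E t = (\<integral>q. wr (A q) (B q) (dd t q) \<partial>P)" for t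
  have wr_meas: "(\<lambda>q. wr (A q) (B q) (dd t q)) \<in> borel_measurable P" if [measurable]: "t \<in> borel_measurable M" for t
    unfolding mP wr_def by measurable
  have wr_int: "integrable P (\<lambda>q. wr (A q) (B q) (dd t q))" if "t \<in> borel_measurable M" for t
  proof (rule intP[of _ 1])
    show "(\<lambda>q. wr (A q) (B q) (dd t q)) \<in> borel_measurable (M \<Otimes>\<^sub>M M)" using wr_meas[OF that] by (simp add: mP)
    fix q assume "q \<in> space P"
    then show "\<bar>wr (A q) (B q) (dd t q)\<bar> \<le> 1"
      using wr_le[of "A q" "B q" "dd t q"] wr_nonneg[of "A q" "B q" "dd t q"] AB_rng[of q] by auto
  qed
  have E_nn: "0 \<le> E t" for t unfolding E_def by (rule integral_nonneg_AE) (auto simp: wr_nonneg)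
  have E_bound: "E t \<le> \<delta> + (K / (4 * \<delta>)) * r"
    if t: "t \<in> borel_measurable M" and \<delta>: "\<delta> > 0" and r: "r > 0" and Nt: "N t < ennreal r" for t \<delta> r
  proof -
    let ?k = "K / (4 * \<delta>)"
    have k: "0 \<le> ?k" using K \<delta> by simp
    have pw: "wr (A q) (B q) (dd t q) \<le> \<delta> + ?k * Dl t q" if "q \<in> space P" for q
      using wr_quad[OF H2[of "A q" "B q" "dd t q"] \<delta> K] AB_rng[OF that] unfolding Dl_def by simp
    have "ennreal (E t) = (\<integral>\<^sup>+q. ennreal (wr (A q) (B q) (dd t q)) \<partial>P)"
      unfolding E_def by (rule nn_integral_eq_integral[OF wr_int[OF t], symmetric]) (auto simp: wr_nonneg)
    also have "\<dots> \<le> (\<integral>\<^sup>+q. ennreal \<delta> + ennreal ?k * ennreal (Dl t q) \<partial>P)"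
    proof (rule nn_integral_mono)
      fix q assume q: "q \<in> space P"
      have "ennreal (wr (A q) (B q) (dd t q)) \<le> ennreal (\<delta> + ?k * Dl t q)" using pw[OF q] by (rule ennreal_leI)
      also have "\<dots> = ennreal \<delta> + ennreal ?k * ennreal (Dl t q)"
      proof -
        have dn: "0 \<le> Dl t q" by (rule Dl_nn[OF q])
        have "ennreal (\<delta> + ?k * Dl t q) = ennreal \<delta> + ennreal (?k * Dl t q)"
          using \<delta> mult_nonneg_nonneg[OF k dn] by (intro ennreal_plus) auto
        also have "ennreal (?k * Dl t q) = ennreal ?k * ennreal (Dl t q)"
          using k dn by (rule ennreal_mult)
        finally show ?thesis .
      qed
      finally show "ennreal (wr (A q) (B q) (dd t q)) \<le> ennreal \<delta> + ennreal ?k * ennreal (Dl t q)" .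
    qed
    also have "\<dots> = ennreal \<delta> + ennreal ?k * N t"
      unfolding N_def using Dl_meas[OF t]
      by (simp add: nn_integral_add nn_integral_cmult p.emeasure_space_1)
    also have "\<dots> \<le> ennreal \<delta> + ennreal ?k * ennreal r"
      using Nt by (intro add_left_mono mult_left_mono) auto
    also have "\<dots> = ennreal (\<delta> + ?k * r)"
    proof -
      have "ennreal (\<delta> + ?k * r) = ennreal \<delta> + ennreal (?k * r)"
        using \<delta> mult_nonneg_nonneg[OF k, of r] r by (intro ennreal_plus) auto
      also have "ennreal (?k * r) = ennreal ?k * ennreal r" using k r by (intro ennreal_mult) auto
      finally show ?thesis by simp
    qed
    finally have le: "ennreal (E t) \<le> ennreal (\<delta> + ?k * r)" .
    have nn: "0 \<le> \<delta> + ?k * r" using \<delta> mult_nonneg_nonneg[OF k, of r] r by simp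
    show ?thesis using le ennreal_le_iff[OF nn] by simp
  qed
  have E_lim: "(\<lambda>i. E (s i)) \<longlonglongrightarrow> 0"
  proof (rule tendstoI)
    fix e :: real assume e: "0 < e"
    define \<delta> where "\<delta> = e / 4"
    define r where "r = e * e / (4 * K)"
    have \<delta>: "\<delta> > 0" and r: "r > 0" using e K unfolding \<delta>_def r_def by auto
    have val: "\<delta> + (K / (4 * \<delta>)) * r = e / 2" using e K unfolding \<delta>_def r_def by (simp add: field_simps)
    show "\<forall>\<^sub>F i in sequentially. dist (E (s i)) 0 < e"
      using evN[OF r]
    proof (rule eventually_mono)
      fix i assume "N (s i) < ennreal r"
      from E_bound[OF sm \<delta> r this] have "E (s i) \<le> e / 2" using val by simp
      then show "dist (E (s i)) 0 < e" using E_nn[of "s i"] e by simp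
    qed
  qed
  define m where "m = (\<integral>q. min (A q) (B q) \<partial>P)"
  define Z where "Z = (\<integral>q. A q + B q \<partial>P)"
  have auc: "auc_risk D t = (m + E t) / Z" if "t \<in> borel_measurable M" for t
    using auc_formula[OF that] unfolding m_def E_def Z_def .
  have Z: "0 \<le> Z" unfolding Z_def
  proof (rule integral_nonneg_AE, rule AE_I2)
    fix q assume "q \<in> space P"
    then show "0 \<le> A q + B q" using AB_rng[of q] by simp
  qed
  have ne: "(borel_measurable M :: ('a \<Rightarrow> real) set) \<noteq> {}"
    using borel_measurable_const[of "0::real" M] by blast
  show ?thesis
  proof (cases "Z = 0")
    case True
    have z: "auc_risk D t = 0" if "t \<in> borel_measurable M" for t using auc[OF that] True by simp
    have "auc_bayes M D = (INF (t::'a \<Rightarrow> real)\<in>borel_measurable M. (0::real))"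
      unfolding auc_bayes_def by (rule arg_cong[where f=Inf], rule image_cong) (auto simp: z)
    also have "\<dots> = (0::real)" using ne by (rule cINF_const)
    finally have b0: "auc_bayes M D = 0" .
    have "(\<lambda>i. auc_risk D (s i)) = (\<lambda>i. 0)" using z sm by auto
    then show ?thesis using b0 by simp
  next
    case False
    then have Zp: "0 < Z" using Z by simp
    have "(\<lambda>i. (m + E (s i)) / Z) \<longlonglongrightarrow> (m + 0) / Z"
      by (rule tendsto_divide[OF tendsto_add[OF tendsto_const E_lim] tendsto_const False])
    moreover have "(\<lambda>i. auc_risk D (s i)) = (\<lambda>i. (m + E (s i)) / Z)" using auc sm by auto
    ultimately have lim: "(\<lambda>i. auc_risk D (s i)) \<longlonglongrightarrow> m / Z" by simp
    have lb: "m / Z \<le> auc_risk D t" if "t \<in> borel_measurable M" for t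
    proof -
      have "m / Z \<le> (m + E t) / Z" using E_nn[of t] Zp by (simp add: divide_right_mono)
      then show ?thesis using auc[OF that] by simp
    qed
    have bdd: "bdd_below ((\<lambda>t. auc_risk D t) ` borel_measurable M)"
      using lb by (intro bdd_belowI2) auto
    have "m / Z \<le> auc_bayes M D" unfolding auc_bayes_def
      by (rule cINF_greatest[OF ne lb])
    moreover have "auc_bayes M D \<le> m / Z"
    proof (rule LIMSEQ_le_const[OF lim])
      have "auc_bayes M D \<le> auc_risk D (s n)" for n
        unfolding auc_bayes_def by (rule cINF_lower[OF bdd sm])
      then show "\<exists>N. \<forall>n\<ge>N. auc_bayes M D \<le> auc_risk D (s n)" by blast
    qed
    ultimately have "auc_bayes M D = m / Z" by simp
    then show ?thesis using lim by simp
  qed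
qed

end

context auc_setting
begin

lemma ext_nonpos:
  fixes f :: "'a \<times> 'a \<Rightarrow> real" and C :: real
  assumes fm: "f \<in> borel_measurable P" and b: "\<And>q. q \<in> space P \<Longrightarrow> - C \<le> f q \<and> f q \<le> 0"
  shows "ext_integral P f = ereal (\<integral>q. f q \<partial>P)"
proof -
  interpret p: prob_space P by (rule P_prob)
  have bb: "\<bar>f q\<bar> \<le> C" if "q \<in> space P" for q using b[OF that] by auto
  have i: "integrable P f"
    using fm bb by (intro p.integrable_const_bound[where B=C]) (auto intro!: AE_I2)
  have "(\<integral>\<^sup>+q. ennreal (f q) \<partial>P) = (\<integral>\<^sup>+q. 0 \<partial>P)"
    using b by (intro nn_integral_cong) (auto simp: ennreal_eq_0_iff)
  then have z: "(\<integral>\<^sup>+q. ennreal (f q) \<partial>P) = 0" by simp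
  have "(\<integral>\<^sup>+q. ennreal (- f q) \<partial>P) = ennreal (\<integral>q. - f q \<partial>P)"
    using i b by (intro nn_integral_eq_integral) (auto intro!: AE_I2)
  moreover have "0 \<le> (\<integral>q. - f q \<partial>P)" using b by (intro integral_nonneg_AE) (auto intro!: AE_I2)
  ultimately show ?thesis unfolding ext_integral_def z by (simp add: zero_ennreal.rep_eq)
qed

lemma split_bounded:
  fixes f g :: "'a \<times> 'a \<Rightarrow> real" and C :: real
  assumes fm: "f \<in> borel_measurable P" and gm: "g \<in> borel_measurable P"
    and bf: "\<And>q. q \<in> space P \<Longrightarrow> \<bar>f q\<bar> \<le> C" and bg: "\<And>q. q \<in> space P \<Longrightarrow> \<bar>g q\<bar> \<le> C"
    and le: "\<And>q. q \<in> space P \<Longrightarrow> g q \<le> f q"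
  shows "ereal (\<integral>q. f q \<partial>P) = ereal (\<integral>q. g q \<partial>P) + enn2ereal (\<integral>\<^sup>+q. ennreal (f q - g q) \<partial>P)"
proof -
  interpret p: prob_space P by (rule P_prob)
  have i: "integrable P f" using fm bf by (intro p.integrable_const_bound[where B=C]) (auto intro!: AE_I2)
  have j: "integrable P g" using gm bg by (intro p.integrable_const_bound[where B=C]) (auto intro!: AE_I2)
  have ij: "integrable P (\<lambda>q. f q - g q)" using i j by simp
  have "(\<integral>\<^sup>+q. ennreal (f q - g q) \<partial>P) = ennreal (\<integral>q. f q - g q \<partial>P)"
    using ij le by (intro nn_integral_eq_integral) (auto intro!: AE_I2)
  moreover have "0 \<le> (\<integral>q. f q - g q \<partial>P)" using le by (intro integral_nonneg_AE) (auto intro!: AE_I2)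
  moreover have "(\<integral>q. f q - g q \<partial>P) = (\<integral>q. f q \<partial>P) - (\<integral>q. g q \<partial>P)" using i j by simp
  ultimately show ?thesis by simp
qed

lemma ext_nonneg:
  fixes f g :: "'a \<times> 'a \<Rightarrow> real" and C :: real
  assumes fm: "f \<in> borel_measurable P" and gm: "g \<in> borel_measurable P"
    and bg: "\<And>q. q \<in> space P \<Longrightarrow> 0 \<le> g q \<and> g q \<le> C"
    and le: "\<And>q. q \<in> space P \<Longrightarrow> g q \<le> f q"
  shows "ext_integral P f = ereal (\<integral>q. g q \<partial>P) + enn2ereal (\<integral>\<^sup>+q. ennreal (f q - g q) \<partial>P)"
proof -
  interpret p: prob_space P by (rule P_prob)
  have j: "integrable P g" using gm bg by (intro p.integrable_const_bound[where B=C]) (auto intro!: AE_I2)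
  have "(\<integral>\<^sup>+q. ennreal (- f q) \<partial>P) = (\<integral>\<^sup>+q. 0 \<partial>P)"
    using bg le by (intro nn_integral_cong) (force simp: ennreal_eq_0_iff)
  then have z: "(\<integral>\<^sup>+q. ennreal (- f q) \<partial>P) = 0" by simp
  have "(\<integral>\<^sup>+q. ennreal (f q) \<partial>P) = (\<integral>\<^sup>+q. ennreal (g q) + ennreal (f q - g q) \<partial>P)"
    using bg le by (intro nn_integral_cong) (auto simp: ennreal_plus[symmetric])
  also have "\<dots> = (\<integral>\<^sup>+q. ennreal (g q) \<partial>P) + (\<integral>\<^sup>+q. ennreal (f q - g q) \<partial>P)"
    using fm gm by (intro nn_integral_add) auto
  also have "(\<integral>\<^sup>+q. ennreal (g q) \<partial>P) = ennreal (\<integral>q. g q \<partial>P)"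
    using j bg by (intro nn_integral_eq_integral) (auto intro!: AE_I2)
  finally have e: "(\<integral>\<^sup>+q. ennreal (f q) \<partial>P) = ennreal (\<integral>q. g q \<partial>P) + (\<integral>\<^sup>+q. ennreal (f q - g q) \<partial>P)" .
  have "0 \<le> (\<integral>q. g q \<partial>P)" using bg by (intro integral_nonneg_AE) (auto intro!: AE_I2)
  then show ?thesis unfolding ext_integral_def z e by (simp add: plus_ennreal.rep_eq zero_ennreal.rep_eq)
qed

end

lemma phi_sgl_bounds: "0 \<le> a \<Longrightarrow> 0 \<le> b \<Longrightarrow> - (a + b) \<le> phi (sgl \<beta>) a b d \<and> phi (sgl \<beta>) a b d \<le> 0"
proof -
  assume ab: "0 \<le> a" "0 \<le> b"
  have s: "0 < sig (\<beta> * d)" "sig (\<beta> * d) \<le> 1" by (rule sig_pos, rule sig_le1)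
  have e: "phi (sgl \<beta>) a b d = - (a * sig (\<beta> * d) + b * (1 - sig (\<beta> * d)))"
    unfolding phi_sgl by (simp add: algebra_simps)
  have "a * sig (\<beta> * d) \<le> a" "b * (1 - sig (\<beta> * d)) \<le> b"
    using ab s by (simp_all add: mult_left_le mult_left_le_one_le)
  moreover have "0 \<le> a * sig (\<beta> * d)" "0 \<le> b * (1 - sig (\<beta> * d))" using ab s by simp_all
  ultimately show ?thesis unfolding e by linarith
qed

lemma PhiL_bounds:
  fixes a b :: real
  assumes "0 \<le> a" "0 \<le> b"
  shows "0 \<le> PhiL a b \<and> PhiL a b \<le> a + b"
proof -
  have part: "0 \<le> x * ln ((x + y) / x) \<and> x * ln ((x + y) / x) \<le> y" if "0 \<le> x" "0 \<le> y" for x y :: real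
  proof (cases "x = 0")
    case True then show ?thesis using that by simp
  next
    case False
    then have x: "0 < x" using that by simp
    have "1 \<le> (x + y) / x" using x that by simp
    then have l0: "0 \<le> ln ((x + y) / x)" by simp
    have "ln ((x + y) / x) \<le> (x + y) / x - 1" using x that by (intro ln_le_minus_one) simp
    then have "x * ln ((x + y) / x) \<le> x * ((x + y) / x - 1)" using x by (intro mult_left_mono) auto
    also have "\<dots> = y" using x by (simp add: field_simps)
    finally show ?thesis using x l0 by simp
  qed
  show ?thesis using part[of a b] part[of b a] assms unfolding PhiL_def by (simp add: add.commute)
qed

context auc_setting
begin

lemma sgl_consistent:
  fixes \<beta> :: real and s :: "nat \<Rightarrow> 'a \<Rightarrow> real"
  assumes \<beta>: "\<beta> > 0" and sm: "\<And>i. s i \<in> borel_measurable M"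
    and conv: "(\<lambda>i. surr_risk (sgl \<beta>) M D \<eta> (s i)) \<longlonglongrightarrow> surr_bayes (sgl \<beta>) M D \<eta>"
  shows "(\<lambda>i. auc_risk D (s i)) \<longlonglongrightarrow> auc_bayes M D"
proof (rule consistency[where \<Phi> = "\<lambda>a b. - max a b" and K = 2, OF _ _ _ _ _ _ _ sm conv])
  show "sgl \<beta> \<in> borel_measurable borel" unfolding sgl_def by measurable
  show "(\<lambda>q. - max (A q) (B q)) \<in> borel_measurable (M \<Otimes>\<^sub>M M)" by measurable
  show "- max a b \<le> phi (sgl \<beta>) a b d" if "0 \<le> a" "a \<le> 1" "0 \<le> b" "b \<le> 1" "a + b \<le> 1" for a b d
    using sgl_lower that by blast
  show "(2::real) > 0" by simp
  show "(wr a b d)\<^sup>2 \<le> 2 * (phi (sgl \<beta>) a b d - - max a b)"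
    if "0 \<le> a" "a \<le> 1" "0 \<le> b" "b \<le> 1" "a + b \<le> 1" for a b d
    using sgl_calib[OF that(1-4) \<beta>] .
next
  fix t :: "'a \<Rightarrow> real" assume t[measurable]: "t \<in> borel_measurable M"
  let ?f = "\<lambda>q. phi (sgl \<beta>) (A q) (B q) (dd t q)" and ?g = "\<lambda>q. - max (A q) (B q)"
  have fm: "?f \<in> borel_measurable P" unfolding mP phi_def sgl_def by measurable
  have gm: "?g \<in> borel_measurable P" unfolding mP by measurable
  have fb: "- 2 \<le> ?f q \<and> ?f q \<le> 0" if "q \<in> space P" for q
    using phi_sgl_bounds[of "A q" "B q" \<beta> "dd t q"] AB_rng[OF that] by auto
  have "surr_risk (sgl \<beta>) M D \<eta> t = ext_integral P ?f" by (rule surr_formula)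
  also have "\<dots> = ereal (\<integral>q. ?f q \<partial>P)" using fm fb by (rule ext_nonpos)
  also have "\<dots> = ereal (\<integral>q. ?g q \<partial>P) + enn2ereal (\<integral>\<^sup>+q. ennreal (?f q - ?g q) \<partial>P)"
  proof (rule split_bounded[OF fm gm, of 2])
    fix q assume q: "q \<in> space P"
    show "\<bar>?f q\<bar> \<le> 2" using fb[OF q] by auto
    show "\<bar>?g q\<bar> \<le> 2" using AB_rng[OF q] by auto
    show "?g q \<le> ?f q" using sgl_lower[of "A q" "B q" \<beta> "dd t q"] AB_rng[OF q] by auto
  qed
  finally show "surr_risk (sgl \<beta>) M D \<eta> t = ereal (\<integral>q. - max (A q) (B q) \<partial>P) +
      enn2ereal (\<integral>\<^sup>+q. ennreal (phi (sgl \<beta>) (A q) (B q) (dd t q) - - max (A q) (B q)) \<partial>P)" .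
next
  fix r :: real assume r: "r > 0"
  define k where "k = 1 / (\<beta> * r)"
  have k: "k > 0" using \<beta> r unfolding k_def by simp
  let ?s = "\<lambda>x. k * \<eta> x"
  have "?s \<in> borel_measurable M" by measurable
  moreover have "\<forall>q\<in>space P. phi (sgl \<beta>) (A q) (B q) (dd ?s q) - - max (A q) (B q) \<le> r"
  proof
    fix q assume q: "q \<in> space P"
    have "dd ?s q = k * (A q - B q)" unfolding dd_def A_def B_def by (simp add: algebra_simps)
    moreover have "1 / (\<beta> * k) = r" using \<beta> r unfolding k_def by simp
    ultimately show "phi (sgl \<beta>) (A q) (B q) (dd ?s q) - - max (A q) (B q) \<le> r"
      using sgl_seq[of "A q" "B q" \<beta> k] AB_rng[OF q] \<beta> k by simp
  qed
  ultimately show "\<exists>s\<in>borel_measurable M. \<forall>q\<in>space P. phi (sgl \<beta>) (A q) (B q) (dd s q) - - max (A q) (B q) \<le> r"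
    by blast
qed

lemma lgl_consistent:
  fixes \<beta> :: real and s :: "nat \<Rightarrow> 'a \<Rightarrow> real"
  assumes \<beta>: "\<beta> > 0" and sm: "\<And>i. s i \<in> borel_measurable M"
    and conv: "(\<lambda>i. surr_risk (lgl \<beta>) M D \<eta> (s i)) \<longlonglongrightarrow> surr_bayes (lgl \<beta>) M D \<eta>"
  shows "(\<lambda>i. auc_risk D (s i)) \<longlonglongrightarrow> auc_bayes M D"
proof (rule consistency[where \<Phi> = PhiL and K = 8, OF _ _ _ _ _ _ _ sm conv])
  show "lgl \<beta> \<in> borel_measurable borel" unfolding lgl_def by measurable
  show "(\<lambda>q. PhiL (A q) (B q)) \<in> borel_measurable (M \<Otimes>\<^sub>M M)" unfolding PhiL_def by measurable
  show "PhiL a b \<le> phi (lgl \<beta>) a b d" if "0 \<le> a" "a \<le> 1" "0 \<le> b" "b \<le> 1" "a + b \<le> 1" for a b d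
    unfolding phi_lgl using that by (intro gibbs) auto
  show "(8::real) > 0" by simp
  show "(wr a b d)\<^sup>2 \<le> 8 * (phi (lgl \<beta>) a b d - PhiL a b)"
    if "0 \<le> a" "a \<le> 1" "0 \<le> b" "b \<le> 1" "a + b \<le> 1" for a b d
    using lgl_calib[OF \<beta> that(1) that(3) that(5)] .
next
  fix t :: "'a \<Rightarrow> real" assume t[measurable]: "t \<in> borel_measurable M"
  let ?f = "\<lambda>q. phi (lgl \<beta>) (A q) (B q) (dd t q)" and ?g = "\<lambda>q. PhiL (A q) (B q)"
  have fm: "?f \<in> borel_measurable P" unfolding mP phi_def lgl_def by measurable
  have gm: "?g \<in> borel_measurable P" unfolding mP PhiL_def by measurable
  have "surr_risk (lgl \<beta>) M D \<eta> t = ext_integral P ?f" by (rule surr_formula)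
  also have "\<dots> = ereal (\<integral>q. ?g q \<partial>P) + enn2ereal (\<integral>\<^sup>+q. ennreal (?f q - ?g q) \<partial>P)"
  proof (rule ext_nonneg[OF fm gm, of 2])
    fix q assume q: "q \<in> space P"
    show "0 \<le> ?g q \<and> ?g q \<le> 2" using PhiL_bounds[of "A q" "B q"] AB_rng[OF q] by auto
    show "?g q \<le> ?f q" unfolding phi_lgl using AB_rng[OF q] by (intro gibbs) auto
  qed
  finally show "surr_risk (lgl \<beta>) M D \<eta> t = ereal (\<integral>q. PhiL (A q) (B q) \<partial>P) +
      enn2ereal (\<integral>\<^sup>+q. ennreal (phi (lgl \<beta>) (A q) (B q) (dd t q) - PhiL (A q) (B q)) \<partial>P)" .
next
  fix r :: real assume r: "r > 0"
  define \<epsilon> where "\<epsilon> = min (1/4) (r / 5)"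
  have \<epsilon>: "0 < \<epsilon>" "\<epsilon> \<le> 1/4" "5 * \<epsilon> \<le> r" using r unfolding \<epsilon>_def by auto
  let ?s = "\<lambda>x. gsc \<beta> \<epsilon> (\<eta> x)"
  have "?s \<in> borel_measurable M" unfolding gsc_def by measurable
  moreover have "\<forall>q\<in>space P. phi (lgl \<beta>) (A q) (B q) (dd ?s q) - PhiL (A q) (B q) \<le> r"
  proof
    fix q assume q: "q \<in> space P"
    obtain x y where xy: "q = (x, y)" "x \<in> space M" "y \<in> space M" using q by (auto simp: space_P)
    have "phi (lgl \<beta>) (A q) (B q) (dd ?s q) - PhiL (A q) (B q) \<le> 5 * \<epsilon>"
      unfolding xy A_def B_def dd_def using lgl_seq[OF \<beta> _ _ _ _ \<epsilon>(1,2), of "\<eta> x" "\<eta> y"] eta_rng xy by auto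
    then show "phi (lgl \<beta>) (A q) (B q) (dd ?s q) - PhiL (A q) (B q) \<le> r" using \<epsilon> by linarith
  qed
  ultimately show "\<exists>s\<in>borel_measurable M. \<forall>q\<in>space P. phi (lgl \<beta>) (A q) (B q) (dd s q) - PhiL (A q) (B q) \<le> r"
    by blast
qed

end

theorem mainTheorem1:
  fixes \<beta> :: real and M :: "'a measure"
  assumes "\<beta> > 0"
  shows "auc_consistent (\<lambda>x. - (1 / (1 + exp (- \<beta> * x)))) M \<and>
         auc_consistent (\<lambda>x. - ln (1 / (1 + exp (- \<beta> * x)))) M"
proof -
  have e1: "(\<lambda>x. - (1 / (1 + exp (- \<beta> * x)))) = sgl \<beta>" by (rule ext) (simp add: sgl_def)
  have e2: "(\<lambda>x. - ln (1 / (1 + exp (- \<beta> * x)))) = lgl \<beta>" by (rule ext) (simp only: lgl_def)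
  have c1: "auc_consistent (sgl \<beta>) M" unfolding auc_consistent_def
  proof (intro allI impI)
    fix D :: "('a \<times> bool) measure" and \<eta> :: "'a \<Rightarrow> real" and s :: "nat \<Rightarrow> 'a \<Rightarrow> real"
    assume h: "prob_space D \<and> sets D = sets (M \<Otimes>\<^sub>M count_space UNIV) \<and> is_cond_pos M D \<eta>"
      and sm: "\<forall>i. s i \<in> borel_measurable M"
      and cv: "(\<lambda>i. surr_risk (sgl \<beta>) M D \<eta> (s i)) \<longlonglongrightarrow> surr_bayes (sgl \<beta>) M D \<eta>"
    have loc: "auc_setting M D \<eta>" by (rule auc_setting.intro) (use h in auto)
    show "(\<lambda>i. auc_risk D (s i)) \<longlonglongrightarrow> auc_bayes M D"
      by (rule auc_setting.sgl_consistent[OF loc assms]) (use sm cv in auto)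
  qed
  have c2: "auc_consistent (lgl \<beta>) M" unfolding auc_consistent_def
  proof (intro allI impI)
    fix D :: "('a \<times> bool) measure" and \<eta> :: "'a \<Rightarrow> real" and s :: "nat \<Rightarrow> 'a \<Rightarrow> real"
    assume h: "prob_space D \<and> sets D = sets (M \<Otimes>\<^sub>M count_space UNIV) \<and> is_cond_pos M D \<eta>"
      and sm: "\<forall>i. s i \<in> borel_measurable M"
      and cv: "(\<lambda>i. surr_risk (lgl \<beta>) M D \<eta> (s i)) \<longlonglongrightarrow> surr_bayes (lgl \<beta>) M D \<eta>"
    have loc: "auc_setting M D \<eta>" by (rule auc_setting.intro) (use h in auto)
    show "(\<lambda>i. auc_risk D (s i)) \<longlonglongrightarrow> auc_bayes M D"
      by (rule auc_setting.lgl_consistent[OF loc assms]) (use sm cv in auto)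
  qed
  show ?thesis unfolding e1 e2 using c1 c2 by simp
qed


end
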